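(* Let $M_1,\dots,M_m$ generate the measured stabilizer group, let $\mathcal C^*$ be the set of nontrivial syndrome classes and, for each class $C$, let $J(C)\subseteq[m]$ be the set of indices of generators anticommuting with the errors of $C$. Suppose real numbers $(X_C)_{C\in\mathcal C^*}$ and $(Y_R)_{R\subseteq[m]}$ satisfy the linear system $$Y_R=\sum_{C\in\mathcal C^*}D_{R,C}X_C\quad\text{for all }R\in\mathcal R,\qquad D_{R,C}=\begin{cases}1&|R\cap J(C)|\text{ odd}\\0&|R\cap J(C)|\text{ even,}\end{cases}$$ where $\mathcal R=\bigcup_{C\in\mathcal C^*}\{R:R\subseteq J(C)\}$ (equivalently, the system $\log\vec\Lambda^{(\mathcal M')}=D'^{(\mathcal M')}\log\vec\nu$ with $X_C=\log\nu_C$, $Y_R=\log\Lambda(\prod_{i\in R}M_i)$, restricted to $\mathcal M'=\bigcup_{C}\{\prod_{i\in J'}M_i:J'\subseteq J(C)\}$). Then for every $C\in\mathcal C^*$, $$X_C=-\sum_{C'\in\mathcal C,\ J(C')\supsetneq J(C)}X_{C'}+\frac{1}{2^{|J(C)|-1}}\sum_{S\subseteq J(C)}(-1)^{|S|-1}Y_S,$$ so that this recursion solves the system.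
   Context: Setting: $n$-qubit Pauli operators without phases; a stabilizer code with measured subgroup $\mathcal M=\langle M_1,\dots,M_m\rangle$; a finite set $\mathcal E_\Gamma$ of local Pauli errors partitioned into syndrome classes according to which generators each error anticommutes with (errors in a class share the same set $J(C)$; distinct classes have distinct sets; the trivial class $C_0$ has $J(C_0)=\emptyset$, and $\mathcal C=\mathcal C^*\cup\{C_0\}$). The row of $D'$ for the stabilizer element $\prod_{i\in R}M_i$ and the column for class $C$ is the binary commutator of that element with any error of $C$, which equals $D_{R,C}$ above. In the application, $\nu_C$ is the learnable transformed eigenvalue of class $C$ and $\Lambda(M)$ the syndrome expectation value of $M$. *)

theory Defs
  imports Complex_Main
begin

definition syndrome_D :: "nat set \<Rightarrow> nat set \<Rightarrow> real" where
  "syndrome_D R JC = (if odd (card (R \<inter> JC)) then 1 else 0)"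

end

theory Submission
  imports Defs
begin

lemma sign_powi: "(-1::real) powi (int n - 1) = - ((-1) ^ n)"
proof (cases n)
  case 0
  then show ?thesis by (simp add: power_int_minus)
next
  case (Suc k)
  then have "int n - 1 = int k" by simp
  then show ?thesis using Suc by simp
qed

lemma D_alt: "syndrome_D S L = (1 - (-1::real) ^ card (S \<inter> L)) / 2"
  by (simp add: syndrome_D_def)

lemma sign_prod:
  assumes "finite S"
  shows "(-1::real) ^ card S * (-1) ^ card (S \<inter> L) = (\<Prod>i\<in>S. if i \<in> L then 1 else -1)"
proof -
  have c: "card S = card (S \<inter> L) + card (S - L)"
    using assms by (metis Int_Diff_disjoint Un_Int_eq(1) Diff_partition card_Un_disjoint finite_Int finite_Diff inf_le1 Int_Diff_Un)
  have "(-1::real) ^ card S * (-1) ^ card (S \<inter> L) = ((-1) ^ card (S \<inter> L))^2 * (-1) ^ card (S - L)"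
    by (simp add: c power_add power2_eq_square)
  also have "\<dots> = (-1) ^ card (S - L)"
    by (simp add: power_even_eq[symmetric] flip: power_mult)
  also have "\<dots> = (\<Prod>i\<in>S. if i \<in> L then 1 else -1)"
    using assms by (simp add: prod.If_cases Diff_eq)
  finally show ?thesis .
qed

lemma comb:
  assumes fin: "finite J" and ne: "J \<noteq> {}"
  shows "(\<Sum>S\<in>Pow J. (-1::real) powi (int (card S) - 1) * syndrome_D S L)
         = (if J \<subseteq> L then 2 ^ (card J - 1) else 0)"
proof -
  have fS: "\<And>S. S \<in> Pow J \<Longrightarrow> finite S" using fin finite_subset by auto
  have "(\<Sum>S\<in>Pow J. (-1::real) powi (int (card S) - 1) * syndrome_D S L)
      = (\<Sum>S\<in>Pow J. (1/2) * (\<Prod>i\<in>S. if i \<in> L then 1 else -1) - (1/2) * (\<Prod>i\<in>S. (-1::real)))"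
  proof (rule sum.cong[OF refl])
    fix S assume "S \<in> Pow J"
    then have f: "finite S" by (rule fS)
    show "(-1::real) powi (int (card S) - 1) * syndrome_D S L
      = (1/2) * (\<Prod>i\<in>S. if i \<in> L then 1 else -1) - (1/2) * (\<Prod>i\<in>S. (-1::real))"
      using sign_prod[OF f, of L] unfolding sign_powi D_alt by (simp add: field_simps)
  qed
  also have "\<dots> = (1/2) * (\<Sum>S\<in>Pow J. (\<Prod>i\<in>S. if i \<in> L then 1 else -1)) - (1/2) * (\<Sum>S\<in>Pow J. (\<Prod>i\<in>S. (-1::real)))"
    by (simp add: sum_subtractf sum_distrib_left)
  also have "(\<Sum>S\<in>Pow J. (\<Prod>i\<in>S. if i \<in> L then 1 else -1)) = (\<Prod>i\<in>J. (if i \<in> L then 1 else -1) + (1::real))"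
    using prod_add[OF fin, of "\<lambda>i. if i \<in> L then 1 else -1::real" "\<lambda>_. 1"] by (simp add: eq_commute)
  also have "(\<Sum>S\<in>Pow J. (\<Prod>i\<in>S. (-1::real))) = 0"
  proof -
    have c: "card J \<noteq> 0" using fin ne by simp
    have "(\<Prod>i\<in>J. (-1) + (1::real)) = (\<Sum>S\<in>Pow J. (\<Prod>i\<in>S. (-1::real)))"
      using prod_add[OF fin, of "\<lambda>i. -1::real" "\<lambda>_. 1"] by simp
    moreover have "(\<Prod>i\<in>J. (-1) + (1::real)) = 0" using c by simp
    ultimately show ?thesis by simp
  qed
  also have "(\<Prod>i\<in>J. (if i \<in> L then 1 else -1) + (1::real)) = (if J \<subseteq> L then 2 ^ card J else 0)"
  proof (cases "J \<subseteq> L")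
    case True
    then have "(\<Prod>i\<in>J. (if i \<in> L then 1 else -1) + (1::real)) = (\<Prod>i\<in>J. 2)"
      by (intro prod.cong) auto
    then show ?thesis using True by simp
  next
    case False
    then obtain i where "i \<in> J" "i \<notin> L" by auto
    then have "(\<Prod>i\<in>J. (if i \<in> L then 1 else -1) + (1::real)) = 0"
      using fin by (intro prod_zero) auto
    then show ?thesis using False by simp
  qed
  finally have E: "(\<Sum>S\<in>Pow J. (-1::real) powi (int (card S) - 1) * syndrome_D S L)
     = 1/2 * (if J \<subseteq> L then 2 ^ card J else 0) - 1/2 * 0" .
  obtain k where k: "card J = Suc k" using ne fin by (cases "card J") auto
  show ?thesis unfolding E k by simp
qed

theorem lemma16:
  fixes m :: nat
    and Cs :: "'c set"       \<comment> \<open>nontrivial syndrome classes C*\<close>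
    and C0 :: 'c             \<comment> \<open>trivial class\<close>
    and J :: "'c \<Rightarrow> nat set"
    and X :: "'c \<Rightarrow> real"
    and Y :: "nat set \<Rightarrow> real"
  assumes fin: "finite Cs"
    and C0_notin: "C0 \<notin> Cs"
    and J_C0: "J C0 = {}"
    and J_sub: "\<forall>C\<in>Cs. J C \<subseteq> {1..m}"
    and J_distinct: "inj_on J (insert C0 Cs)"
    and system: "\<forall>R \<in> (\<Union>C\<in>Cs. Pow (J C)).
                   Y R = (\<Sum>C\<in>Cs. syndrome_D R (J C) * X C)"
  shows "\<forall>C\<in>Cs. X C =
           - (\<Sum>C'\<in>{C' \<in> insert C0 Cs. J C' \<supset> J C}. X C')
           + (1 / 2 ^ (card (J C) - 1)) *
             (\<Sum>S\<in>Pow (J C). (-1::real) powi (int (card S) - 1) * Y S)"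
proof
  fix C assume C: "C \<in> Cs"
  have ne: "J C \<noteq> {}"
    using J_distinct C C0_notin J_C0 by (metis inj_onD insertCI)
  have finJ: "finite (J C)" using J_sub C by (meson finite_atLeastAtMost finite_subset)
  have "(\<Sum>S\<in>Pow (J C). (-1::real) powi (int (card S) - 1) * Y S)
      = (\<Sum>S\<in>Pow (J C). (\<Sum>C'\<in>Cs. (-1::real) powi (int (card S) - 1) * syndrome_D S (J C') * X C'))"
    using system C by (intro sum.cong refl) (auto simp: sum_distrib_left mult.assoc)
  also have "\<dots> = (\<Sum>C'\<in>Cs. X C' * (\<Sum>S\<in>Pow (J C). (-1::real) powi (int (card S) - 1) * syndrome_D S (J C')))"
    by (subst sum.swap) (simp add: sum_distrib_left mult.commute mult.left_commute)
  also have "\<dots> = (\<Sum>C'\<in>Cs. X C' * (if J C \<subseteq> J C' then 2 ^ (card (J C) - 1) else 0))"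
    using comb[OF finJ ne] by simp
  also have "\<dots> = 2 ^ (card (J C) - 1) * (\<Sum>C'\<in>{C'\<in>Cs. J C \<subseteq> J C'}. X C')"
    using fin by (simp add: sum.inter_filter[symmetric] sum_distrib_left mult.commute if_distrib cong: if_cong)
  finally have T: "(\<Sum>S\<in>Pow (J C). (-1::real) powi (int (card S) - 1) * Y S)
      = 2 ^ (card (J C) - 1) * (\<Sum>C'\<in>{C'\<in>Cs. J C \<subseteq> J C'}. X C')" .
  have set1: "{C' \<in> insert C0 Cs. J C' \<supset> J C} = {C'\<in>Cs. J C' \<supset> J C}"
    using J_C0 by auto
  have set2: "{C'\<in>Cs. J C \<subseteq> J C'} = insert C {C'\<in>Cs. J C' \<supset> J C}"
  proof -
    have "\<And>C'. C' \<in> Cs \<Longrightarrow> J C' = J C \<Longrightarrow> C' = C"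
      using J_distinct C by (meson inj_onD insertCI)
    then show ?thesis using C by auto
  qed
  have "(\<Sum>C'\<in>{C'\<in>Cs. J C \<subseteq> J C'}. X C') = X C + (\<Sum>C'\<in>{C'\<in>Cs. J C' \<supset> J C}. X C')"
    unfolding set2 using fin by (subst sum.insert) auto
  then show "X C =
           - (\<Sum>C'\<in>{C' \<in> insert C0 Cs. J C' \<supset> J C}. X C')
           + (1 / 2 ^ (card (J C) - 1)) *
             (\<Sum>S\<in>Pow (J C). (-1::real) powi (int (card S) - 1) * Y S)"
    unfolding set1 T by simp
qed

end
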